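(* Let $QI^+(\mathbb{R})$ be the index $2$ subgroup of $QI(\mathbb{R})$ consisting of classes of quasi-isometries fixing the ends $+\infty$ and $-\infty$. Let $Q_+$ (resp. $Q_-$) be the subgroup of $QI(\mathbb{R})$ consisting of classes $[f]$ with $f$ a quasi-isometry that is the identity near $-\infty$ (resp. near $+\infty$). Then $Q_+$ and $Q_-$ are subgroups of $QI^+(\mathbb{R})$, and $QI^+(\mathbb{R})\cong Q_+\times Q_-$; more precisely, $Q_+\cap Q_-$ is trivial, elements of $Q_+$ commute with elements of $Q_-$, and $QI^+(\mathbb{R})=Q_+Q_-$, so $QI^+(\mathbb{R})$ is the internal direct product of $Q_+$ and $Q_-$.
   Context: A map $f:\mathbb{R}\to\mathbb{R}$ is a quasi-isometry if there is $K>1$ such that $\frac{1}{K}|x_1-x_2|-K\le |f(x_1)-f(x_2)|\le K|x_1-x_2|+K$ for all $x_1,x_2$, and every $y\in\mathbb{R}$ is within distance $K$ of some $f(x)$. Two quasi-isometries are equivalent if their difference is bounded; $QI(\mathbb{R})$ is the group of equivalence classes $[f]$ under $[f][g]=[f\circ g]$. A quasi-isometry $f$ fixes the ends if $f(t)\to+\infty$ as $t\to+\infty$ and $f(t)\to-\infty$ as $t\to-\infty$. "$f$ is the identity near $-\infty$" means there is $c\in\mathbb{R}$ with $f(t)=t$ for all $t\le c$ (similarly near $+\infty$: $f(t)=t$ for all $t\ge c$). *)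

theory Defs
  imports Complex_Main "HOL-Algebra.Algebra"
begin

definition quasi_isometry :: "(real \<Rightarrow> real) \<Rightarrow> bool" where
  "quasi_isometry f \<longleftrightarrow> (\<exists>K>1.
      (\<forall>x1 x2. \<bar>x1 - x2\<bar> / K - K \<le> \<bar>f x1 - f x2\<bar> \<and> \<bar>f x1 - f x2\<bar> \<le> K * \<bar>x1 - x2\<bar> + K)
    \<and> (\<forall>y. \<exists>x. \<bar>y - f x\<bar> \<le> K))"

definition qi_rel :: "((real \<Rightarrow> real) \<times> (real \<Rightarrow> real)) set" where
  "qi_rel = {(f, g). quasi_isometry f \<and> quasi_isometry g \<and> (\<exists>B. \<forall>x. \<bar>f x - g x\<bar> \<le> B)}"

definition qi_class :: "(real \<Rightarrow> real) \<Rightarrow> (real \<Rightarrow> real) set" where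
  "qi_class f = qi_rel `` {f}"

definition QI :: "(real \<Rightarrow> real) set monoid" where
  "QI = \<lparr> carrier = {f. quasi_isometry f} // qi_rel,
          monoid.mult = (\<lambda>A B. qi_class ((SOME f. f \<in> A) \<circ> (SOME g. g \<in> B))),
          one = qi_class id \<rparr>"

definition fixes_ends :: "(real \<Rightarrow> real) \<Rightarrow> bool" where
  "fixes_ends f \<longleftrightarrow> filterlim f at_top at_top \<and> filterlim f at_bot at_bot"

definition id_near_minus_inf :: "(real \<Rightarrow> real) \<Rightarrow> bool" where
  "id_near_minus_inf f \<longleftrightarrow> (\<exists>c. \<forall>t\<le>c. f t = t)"

definition id_near_plus_inf :: "(real \<Rightarrow> real) \<Rightarrow> bool" where
  "id_near_plus_inf f \<longleftrightarrow> (\<exists>c. \<forall>t\<ge>c. f t = t)"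

definition QI_plus :: "(real \<Rightarrow> real) set set" where
  "QI_plus = {C \<in> carrier QI. \<exists>f\<in>C. fixes_ends f}"

definition Q_plus :: "(real \<Rightarrow> real) set set" where
  "Q_plus = {C \<in> carrier QI. \<exists>f\<in>C. id_near_minus_inf f}"

definition Q_minus :: "(real \<Rightarrow> real) set set" where
  "Q_minus = {C \<in> carrier QI. \<exists>f\<in>C. id_near_plus_inf f}"

end

theory Submission
  imports Defs
begin


definition coarse_lip :: "real \<Rightarrow> (real \<Rightarrow> real) \<Rightarrow> bool" where
  "coarse_lip K f \<longleftrightarrow> (\<forall>a b. \<bar>f a - f b\<bar> \<le> K * \<bar>a - b\<bar> + K)"

definition coarse_inc :: "real \<Rightarrow> real \<Rightarrow> (real \<Rightarrow> real) \<Rightarrow> bool" where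
  "coarse_inc K C f \<longleftrightarrow> (\<forall>x y. x \<le> y \<longrightarrow> (y - x) / K - C \<le> f y - f x)"

definition nice :: "(real \<Rightarrow> real) \<Rightarrow> bool" where
  "nice f \<longleftrightarrow> (\<exists>K>0. \<exists>C. coarse_lip K f \<and> coarse_inc K C f)"

lemma qi_elim:
  assumes "quasi_isometry f"
  obtains K where "K > 1" "coarse_lip K f" "\<And>a b. \<bar>a - b\<bar> / K - K \<le> \<bar>f a - f b\<bar>"
    "\<And>y. \<exists>x. \<bar>y - f x\<bar> \<le> K"
  using assms unfolding quasi_isometry_def coarse_lip_def by blast

lemma qi_intro:
  assumes "A > 0" "L > 0" "coarse_lip A f" "\<And>a b. \<bar>a - b\<bar> / L - L \<le> \<bar>f a - f b\<bar>"
    "\<And>y. \<exists>x. \<bar>y - f x\<bar> \<le> S"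
  shows "quasi_isometry f"
proof -
  define K where "K = max (max A L) (max S 2)"
  have K1: "K > 1" unfolding K_def by auto
  have KA: "A \<le> K" "L \<le> K" "S \<le> K" unfolding K_def by auto
  have P1: "\<bar>x1 - x2\<bar> / K - K \<le> \<bar>f x1 - f x2\<bar>" for x1 x2
  proof -
    have "\<bar>x1 - x2\<bar> / K \<le> \<bar>x1 - x2\<bar> / L"
      using KA assms(2) by (intro divide_left_mono) auto
    then show ?thesis
      using assms(4)[of x1 x2] KA by linarith
  qed
  have P2: "\<bar>f x1 - f x2\<bar> \<le> K * \<bar>x1 - x2\<bar> + K" for x1 x2
  proof -
    have "A * \<bar>x1 - x2\<bar> \<le> K * \<bar>x1 - x2\<bar>" using KA by (intro mult_right_mono) auto
    then show ?thesis
      using assms(3) KA unfolding coarse_lip_def by (smt (verit))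
  qed
  have P3: "\<exists>x. \<bar>y - f x\<bar> \<le> K" for y
  proof -
    obtain x where "\<bar>y - f x\<bar> \<le> S" using assms(5)[of y] by blast
    then show ?thesis using KA by (intro exI[of _ x]) linarith
  qed
  show ?thesis unfolding quasi_isometry_def using K1 P1 P2 P3 by blast
qed

lemma coarse_lip_mono: "coarse_lip K f \<Longrightarrow> K \<le> K' \<Longrightarrow> coarse_lip K' f"
  unfolding coarse_lip_def
  by (smt (verit, best) abs_ge_zero mult_right_mono)

lemma coarse_lip_bound:
  assumes "coarse_lip K f" "L \<le> t" "t \<le> U"
  shows "\<bar>f t\<bar> \<le> \<bar>f L\<bar> + K * (U - L) + K"
proof -
  have "\<bar>f t - f L\<bar> \<le> K * \<bar>t - L\<bar> + K" using assms(1) unfolding coarse_lip_def by blast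
  moreover have "K \<ge> 0"
  proof -
    have "\<bar>f 0 - f 0\<bar> \<le> K * \<bar>0 - 0\<bar> + K" using assms(1) unfolding coarse_lip_def by blast
    then show ?thesis by simp
  qed
  ultimately have "\<bar>f t - f L\<bar> \<le> K * (U - L) + K" using assms(2,3)
    by (smt (verit, best) mult_left_mono)
  then show ?thesis by linarith
qed

lemma qi_id: "quasi_isometry id"
  by (rule qi_intro[of 1 1 _ 0]) (auto simp: coarse_lip_def)

lemma qi_comp:
  assumes "quasi_isometry f" "quasi_isometry g"
  shows "quasi_isometry (f \<circ> g)"
proof -
  obtain K1 where K1: "K1 > 1" "coarse_lip K1 f" "\<And>a b. \<bar>a - b\<bar> / K1 - K1 \<le> \<bar>f a - f b\<bar>"
    "\<And>y. \<exists>x. \<bar>y - f x\<bar> \<le> K1" using qi_elim[OF assms(1)] by blast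
  obtain K2 where K2: "K2 > 1" "coarse_lip K2 g" "\<And>a b. \<bar>a - b\<bar> / K2 - K2 \<le> \<bar>g a - g b\<bar>"
    "\<And>y. \<exists>x. \<bar>y - g x\<bar> \<le> K2" using qi_elim[OF assms(2)] by blast
  show ?thesis
  proof (rule qi_intro[of "K1 * K2 + K1" "K1 * K2 + K1 + K2" _ "2 * K1 + K1 * K2"])
    show "0 < K1 * K2 + K1" using K1 K2 by (simp add: add_pos_pos)
    show "0 < K1 * K2 + K1 + K2" using K1 K2 by (simp add: add_pos_pos)
    show "coarse_lip (K1 * K2 + K1) (f \<circ> g)" unfolding coarse_lip_def
    proof (intro allI)
      fix a b
      have "\<bar>f (g a) - f (g b)\<bar> \<le> K1 * \<bar>g a - g b\<bar> + K1" using K1(2) unfolding coarse_lip_def by blast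
      also have "\<dots> \<le> K1 * (K2 * \<bar>a - b\<bar> + K2) + K1"
        using K2(2) K1(1) unfolding coarse_lip_def by (intro add_right_mono mult_left_mono) auto
      also have "\<dots> \<le> (K1 * K2 + K1) * \<bar>a - b\<bar> + (K1 * K2 + K1)"
        using K1(1) by (simp add: algebra_simps)
      finally show "\<bar>(f \<circ> g) a - (f \<circ> g) b\<bar> \<le> (K1 * K2 + K1) * \<bar>a - b\<bar> + (K1 * K2 + K1)" by simp
    qed
    fix a b
    have "(\<bar>a - b\<bar> / K2 - K2) / K1 - K1 \<le> \<bar>g a - g b\<bar> / K1 - K1"
      using K2(3)[of a b] K1(1) by (intro diff_right_mono divide_right_mono) auto
    also have "\<dots> \<le> \<bar>f (g a) - f (g b)\<bar>" using K1(3) .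
    finally have *: "(\<bar>a - b\<bar> / K2 - K2) / K1 - K1 \<le> \<bar>f (g a) - f (g b)\<bar>" .
    have "\<bar>a - b\<bar> / (K1 * K2 + K1 + K2) \<le> \<bar>a - b\<bar> / (K1 * K2)"
      using K1(1) K2(1) by (intro divide_left_mono) (auto simp: add_pos_pos)
    moreover have "(\<bar>a - b\<bar> / K2 - K2) / K1 = \<bar>a - b\<bar> / (K1 * K2) - K2 / K1"
      using K1(1) K2(1) by (simp add: field_simps)
    moreover have "K2 / K1 \<le> K2" using K1(1) K2(1) by (simp add: divide_le_eq)
    ultimately show "\<bar>a - b\<bar> / (K1 * K2 + K1 + K2) - (K1 * K2 + K1 + K2) \<le> \<bar>(f \<circ> g) a - (f \<circ> g) b\<bar>"
      using * K1(1) K2(1) by (smt (verit) comp_apply mult_pos_pos)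
  next
    fix y
    obtain x where x: "\<bar>y - f x\<bar> \<le> K1" using K1(4) by blast
    obtain w where w: "\<bar>x - g w\<bar> \<le> K2" using K2(4) by blast
    have "\<bar>f x - f (g w)\<bar> \<le> K1 * \<bar>x - g w\<bar> + K1" using K1(2) unfolding coarse_lip_def by blast
    also have "\<dots> \<le> K1 * K2 + K1" using w K1(1) by (intro add_right_mono mult_left_mono) auto
    finally show "\<exists>x. \<bar>y - (f \<circ> g) x\<bar> \<le> 2 * K1 + K1 * K2" using x
      by (intro exI[of _ w]) auto
  qed
qed


lemma coarse_lip_nonneg: "coarse_lip K f \<Longrightarrow> K \<ge> 0"
proof -
  assume "coarse_lip K f"
  then have "\<bar>f 0 - f 0\<bar> \<le> K * \<bar>0 - 0\<bar> + K" unfolding coarse_lip_def by blast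
  then show ?thesis by simp
qed

lemma coarse_ivt:
  assumes cl: "coarse_lip K f" and yt: "y \<le> t" and fy: "f y < v" and ft: "v \<le> f t"
  shows "\<exists>z\<ge>y. z \<le> t + 1 \<and> \<bar>f z - v\<bar> \<le> 2 * K"
proof -
  have K0: "K \<ge> 0" using coarse_lip_nonneg[OF cl] .
  have step: "\<bar>f a - f b\<bar> \<le> 2 * K" if "\<bar>a - b\<bar> \<le> 1" for a b
  proof -
    have "\<bar>f a - f b\<bar> \<le> K * \<bar>a - b\<bar> + K" using cl unfolding coarse_lip_def by blast
    also have "K * \<bar>a - b\<bar> \<le> K * 1" using that K0 by (intro mult_left_mono) auto
    finally show ?thesis by simp
  qed
  define N where "N = nat \<lceil>t - y\<rceil>"
  have N1: "real N \<ge> t - y" unfolding N_def using yt by linarith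
  have N2: "real N < t - y + 1" unfolding N_def using yt by linarith
  show ?thesis
  proof (cases "\<exists>n\<le>N. v \<le> f (y + real n)")
    case True
    then obtain n where n: "n \<le> N" "v \<le> f (y + real n)" by blast
    obtain k where k: "k \<le> n" "\<forall>i<k. \<not> v \<le> f (y + real i)" "v \<le> f (y + real k)"
      using ex_least_nat_le[of "\<lambda>n. v \<le> f (y + real n)" n] n fy by auto
    have "k \<noteq> 0" using k fy by (metis add.right_neutral of_nat_0 not_le)
    then obtain m where m: "k = Suc m" by (cases k) auto
    have "f (y + real m) < v" using k(2) m by auto
    moreover have "\<bar>f (y + real k) - f (y + real m)\<bar> \<le> 2 * K" using m by (intro step) auto
    ultimately have fk: "\<bar>f (y + real k) - v\<bar> \<le> 2 * K" using k(3) by linarith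
    have kN: "real k \<le> real N" using k(1) n(1) by simp
    have "y + real k \<le> t + 1" using kN N2 by linarith
    then show ?thesis using fk by (intro exI[of _ "y + real k"]) auto
  next
    case False
    then have "f (y + real N) < v" by auto
    moreover have "\<bar>f (y + real N) - f t\<bar> \<le> 2 * K" using N1 N2 by (intro step) auto
    ultimately have "\<bar>f (y + real N) - v\<bar> \<le> 2 * K" using ft by linarith
    then show ?thesis using N2 by (intro exI[of _ "y + real N"]) auto
  qed
qed

lemma coarse_lip_uminus: "coarse_lip K f \<Longrightarrow> coarse_lip K (\<lambda>x. - f x)"
  unfolding coarse_lip_def minus_diff_minus abs_minus_cancel by blast

lemma coarse_ivt_down:
  assumes cl: "coarse_lip K f" and yt: "y \<le> t" and fy: "f y > v" and ft: "v \<ge> f t"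
  shows "\<exists>z\<ge>y. z \<le> t + 1 \<and> \<bar>f z - v\<bar> \<le> 2 * K"
proof -
  obtain z where "z \<ge> y" "z \<le> t + 1" "\<bar>- f z - (- v)\<bar> \<le> 2 * K"
    using coarse_ivt[OF coarse_lip_uminus[OF cl] yt, of "-v"] fy ft by auto
  then show ?thesis by (intro exI[of _ z]) (auto simp: abs_minus_commute)
qed

lemma nice_bounds:
  assumes "K > 0" "coarse_inc K C f"
  shows "x \<ge> 0 \<Longrightarrow> f x \<ge> f 0 + x / K - C" and "x \<le> 0 \<Longrightarrow> f x \<le> f 0 + x / K + C"
proof -
  show "f x \<ge> f 0 + x / K - C" if "x \<ge> 0"
  proof -
    have "(x - 0) / K - C \<le> f x - f 0" using assms(2) that unfolding coarse_inc_def by blast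
    then show ?thesis by simp
  qed
  assume "x \<le> 0"
  then have "(0 - x) / K - C \<le> f 0 - f x" using assms(2) unfolding coarse_inc_def by blast
  then show "f x \<le> f 0 + x / K + C" by (simp add: diff_divide_distrib)
qed

lemma nice_qi_fixes:
  assumes "nice f"
  shows "quasi_isometry f" "fixes_ends f"
proof -
  obtain K C where K: "K > 0" "coarse_lip K f" "coarse_inc K C f" using assms unfolding nice_def by blast
  have up: "\<exists>N. \<forall>x\<ge>N. Z \<le> f x" for Z
  proof (intro exI allI impI)
    fix x assume x: "max 0 (K * (Z - f 0 + C)) \<le> x"
    then have "K * (Z - f 0 + C) / K \<le> x / K" using K(1) by (intro divide_right_mono) auto
    then have "Z - f 0 + C \<le> x / K" using K(1) by simp
    then show "Z \<le> f x" using nice_bounds(1)[OF K(1,3), of x] x by linarith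
  qed
  have down: "\<exists>N. \<forall>x\<le>N. f x \<le> Z" for Z
  proof (intro exI allI impI)
    fix x assume x: "x \<le> min 0 (K * (Z - f 0 - C))"
    then have "x / K \<le> K * (Z - f 0 - C) / K" using K(1) by (intro divide_right_mono) auto
    then have "x / K \<le> Z - f 0 - C" using K(1) by simp
    then show "f x \<le> Z" using nice_bounds(2)[OF K(1,3), of x] x by linarith
  qed
  show "fixes_ends f" unfolding fixes_ends_def filterlim_at_top filterlim_at_bot
    eventually_at_top_linorder eventually_at_bot_linorder using up down by blast
  show "quasi_isometry f"
  proof (rule qi_intro[of K "max K (max C 1)" f "2 * K"])
    show "0 < K" "0 < max K (max C 1)" "coarse_lip K f" using K by auto
    fix a b :: real
    have "(0 - 0) / K - C \<le> f 0 - f 0" using K(3) unfolding coarse_inc_def by blast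
    then have C0: "C \<ge> 0" by simp
    have lo: "\<bar>a - b\<bar> / K - C \<le> \<bar>f a - f b\<bar>"
    proof (cases "a \<le> b")
      case True
      then have "(b - a) / K - C \<le> f b - f a" using K(3) unfolding coarse_inc_def by blast
      then show ?thesis using True C0 by (simp add: abs_if)
    next
      case False
      then have "(a - b) / K - C \<le> f a - f b" using K(3) unfolding coarse_inc_def by auto
      then show ?thesis using False C0 by (simp add: abs_if)
    qed
    have "\<bar>a - b\<bar> / max K (max C 1) \<le> \<bar>a - b\<bar> / K" using K(1)
      by (intro divide_left_mono) auto
    then show "\<bar>a - b\<bar> / max K (max C 1) - max K (max C 1) \<le> \<bar>f a - f b\<bar>" using lo by linarith
  next
    fix v
    obtain N1 where N1: "\<forall>x\<le>N1. f x \<le> v - 1" using down by blast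
    obtain N2 where N2: "\<forall>x\<ge>N2. v \<le> f x" using up by blast
    have a1: "min N1 N2 \<le> max N1 N2" by simp
    have "f (min N1 N2) \<le> v - 1" using N1 by simp
    then have a2: "f (min N1 N2) < v" by linarith
    have a3: "v \<le> f (max N1 N2)" using N2 by simp
    obtain z where "\<bar>f z - v\<bar> \<le> 2 * K"
      using coarse_ivt[OF K(2) a1 a2 a3] by blast
    then show "\<exists>x. \<bar>v - f x\<bar> \<le> 2 * K" by (auto simp: abs_minus_commute)
  qed
qed

lemma qi_fixes_nice:
  assumes qi: "quasi_isometry f" and fe: "fixes_ends f"
  shows "nice f"
proof -
  obtain K where K: "K > 1" "coarse_lip K f" "\<And>a b. \<bar>a - b\<bar> / K - K \<le> \<bar>f a - f b\<bar>"
    using qi_elim[OF qi] by metis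
  have up: "\<exists>N. \<forall>x\<ge>N. Z \<le> f x" for Z
    using fe unfolding fixes_ends_def filterlim_at_top eventually_at_top_linorder by blast
  have rev: "y - x \<le> 3 * K * K" if xy: "x < y" "f y < f x" for x y
  proof -
    obtain N where N: "\<forall>t\<ge>N. f x \<le> f t" using up by blast
    have yt: "y \<le> max y N" by simp
    have ft: "f x \<le> f (max y N)" using N by simp
    obtain z where z: "z \<ge> y" "\<bar>f z - f x\<bar> \<le> 2 * K"
      using coarse_ivt[OF K(2) yt xy(2) ft] by blast
    have "\<bar>z - x\<bar> / K \<le> 3 * K" using K(3)[of z x] z by linarith
    then have "\<bar>z - x\<bar> \<le> 3 * K * K" using K(1) by (simp add: divide_le_eq mult.commute)
    then show ?thesis using z xy by linarith
  qed
  have "coarse_inc K (3 * K * K * K + 5 * K) f" unfolding coarse_inc_def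
  proof (intro allI impI)
    fix x y :: real assume xy: "x \<le> y"
    show "(y - x) / K - (3 * K * K * K + 5 * K) \<le> f y - f x"
    proof (cases "f x \<le> f y")
      case True
      then have "(y - x) / K - K \<le> f y - f x" using K(3)[of y x] xy by simp
      moreover have "K \<le> 3 * K * K * K + 5 * K" using K(1) by (simp add: add_increasing)
      ultimately show ?thesis by linarith
    next
      case False
      then have "x < y" using xy by (cases "x = y") auto
      then have d: "y - x \<le> 3 * K * K" using rev False by auto
      have "\<bar>f y - f x\<bar> \<le> K * \<bar>y - x\<bar> + K" using K(2) unfolding coarse_lip_def by blast
      also have "K * \<bar>y - x\<bar> \<le> K * (3 * K * K)" using d xy K(1) by (intro mult_left_mono) auto
      finally have a: "f x - f y \<le> 3 * K * K * K + K" using False by (simp add: mult.assoc)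
      have "(y - x) / K \<le> (3 * K * K) / K" using d K(1) by (intro divide_right_mono) auto
      also have "\<dots> = 3 * K" using K(1) by simp
      finally have "(y - x) / K \<le> 3 * K" .
      then show ?thesis using a K(1) by linarith
    qed
  qed
  then show ?thesis unfolding nice_def using K by (intro exI[of _ K]) auto
qed



lemma fe_perturb:
  assumes "fixes_ends f" "\<And>x. \<bar>f x - g x\<bar> \<le> B"
  shows "fixes_ends g"
proof -
  have t: "\<forall>Z. eventually (\<lambda>x. Z \<le> f x) at_top" and b: "\<forall>Z. eventually (\<lambda>x. f x \<le> Z) at_bot"
    using assms(1) unfolding fixes_ends_def filterlim_at_top filterlim_at_bot by auto
  have "eventually (\<lambda>x. Z \<le> g x) at_top" for Z
  proof (rule eventually_mono[OF t[rule_format, of "Z + B"]])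
    fix x assume "Z + B \<le> f x" then show "Z \<le> g x" using assms(2)[of x] by linarith
  qed
  moreover have "eventually (\<lambda>x. g x \<le> Z) at_bot" for Z
  proof (rule eventually_mono[OF b[rule_format, of "Z - B"]])
    fix x assume "f x \<le> Z - B" then show "g x \<le> Z" using assms(2)[of x] by linarith
  qed
  ultimately show ?thesis unfolding fixes_ends_def filterlim_at_top filterlim_at_bot by auto
qed

lemma fe_comp: "fixes_ends f \<Longrightarrow> fixes_ends g \<Longrightarrow> fixes_ends (f \<circ> g)"
  unfolding fixes_ends_def comp_def using filterlim_compose by blast

lemma fe_id: "fixes_ends id"
  unfolding fixes_ends_def by (simp add: filterlim_ident id_def)

lemma idminus_fe:
  assumes qi: "quasi_isometry f" and c: "\<And>t. t \<le> c \<Longrightarrow> f t = t"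
  shows "fixes_ends f"
proof -
  obtain K where K: "K > 1" "coarse_lip K f" "\<And>a b. \<bar>a - b\<bar> / K - K \<le> \<bar>f a - f b\<bar>"
    "\<And>y. \<exists>x. \<bar>y - f x\<bar> \<le> K" using qi_elim[OF qi] by metis
  have fc: "f c = c" using c by simp
  have bot: "\<exists>N. \<forall>x\<le>N. f x \<le> Z" for Z
    by (rule exI[of _ "min c Z"]) (auto simp: c)
  have prp: "(t - c) / K - K - \<bar>c\<bar> \<le> \<bar>f t\<bar>" if "t \<ge> c" for t
    using K(3)[of t c] fc that by (simp add: abs_if split: if_splits)
  have unb: "\<exists>x\<ge>t. f x > 0" for t
  proof -
    define Y where "Y = \<bar>c\<bar> + K * \<bar>t - c\<bar> + 2 * K + 1"
    obtain x where x: "\<bar>Y - f x\<bar> \<le> K" using K(4) by blast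
    have "x \<ge> t"
    proof (rule ccontr)
      assume "\<not> x \<ge> t"
      then have xt: "x < t" by simp
      show False
      proof (cases "x \<le> c")
        case True
        then show False using x c[OF True] unfolding Y_def using K(1)
          by (smt (verit, best) abs_ge_zero mult_nonneg_nonneg)
      next
        case False
        have "\<bar>f x - f c\<bar> \<le> K * \<bar>x - c\<bar> + K" using K(2) unfolding coarse_lip_def by blast
        moreover have "K * \<bar>x - c\<bar> \<le> K * \<bar>t - c\<bar>" using False xt K(1)
          by (intro mult_left_mono) auto
        ultimately have "f x \<le> c + K * \<bar>t - c\<bar> + K" using fc by linarith
        then show False using x unfolding Y_def by linarith
      qed
    qed
    moreover have "f x > 0" using x unfolding Y_def using K(1)
      by (smt (verit, best) abs_ge_zero mult_nonneg_nonneg)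
    ultimately show ?thesis by blast
  qed
  define N0 where "N0 = c + K * (3 * K + \<bar>c\<bar> + 1)"
  have big: "\<bar>f t\<bar> \<ge> 2 * K + 1" if "t \<ge> N0" for t
  proof -
    have "K * (3 * K + \<bar>c\<bar> + 1) \<ge> 0" using K(1) by simp
    then have tc: "t \<ge> c" using that unfolding N0_def by linarith
    have "3 * K + \<bar>c\<bar> + 1 \<le> (t - c) / K" using that K(1) unfolding N0_def
      by (simp add: pos_le_divide_eq mult.commute)
    then show ?thesis using prp[OF tc] by linarith
  qed
  have pos: "f t > 0" if "t \<ge> N0" for t
  proof (rule ccontr)
    assume "\<not> f t > 0"
    then have ft: "f t < 0" using big[OF that] K(1) by linarith
    obtain x where x: "x \<ge> t" "f x > 0" using unb by blast
    obtain z where z: "z \<ge> t" "\<bar>f z - 0\<bar> \<le> 2 * K"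
      using coarse_ivt[OF K(2) x(1) ft, of] x(2) by force
    then show False using big[of z] that by simp
  qed
  have top: "\<exists>N. \<forall>x\<ge>N. Z \<le> f x" for Z
  proof (intro exI allI impI)
    fix x assume x: "max N0 (c + K * (Z + K + \<bar>c\<bar>)) \<le> x"
    then have "Z + K + \<bar>c\<bar> \<le> (x - c) / K" using K(1)
      by (simp add: pos_le_divide_eq mult.commute)
    moreover have "x \<ge> c"
    proof -
      have "K * (3 * K + \<bar>c\<bar> + 1) \<ge> 0" using K(1) by simp
      then show ?thesis using x unfolding N0_def by linarith
    qed
    ultimately show "Z \<le> f x" using prp[of x] pos[of x] x by simp
  qed
  show ?thesis unfolding fixes_ends_def filterlim_at_top filterlim_at_bot
    eventually_at_top_linorder eventually_at_bot_linorder using top bot by blast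
qed

lemma idplus_fe:
  assumes qi: "quasi_isometry f" and c: "\<And>t. t \<ge> c \<Longrightarrow> f t = t"
  shows "fixes_ends f"
proof -
  obtain K where K: "K > 1" "coarse_lip K f" "\<And>a b. \<bar>a - b\<bar> / K - K \<le> \<bar>f a - f b\<bar>"
    "\<And>y. \<exists>x. \<bar>y - f x\<bar> \<le> K" using qi_elim[OF qi] by metis
  have fc: "f c = c" using c by simp
  have top: "\<exists>N. \<forall>x\<ge>N. Z \<le> f x" for Z
    by (rule exI[of _ "max c Z"]) (auto simp: c)
  have prp: "(c - t) / K - K - \<bar>c\<bar> \<le> \<bar>f t\<bar>" if "t \<le> c" for t
    using K(3)[of t c] fc that by (simp add: abs_if split: if_splits)
  have unb: "\<exists>x\<le>t. f x < 0" for t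
  proof -
    define Y where "Y = - (\<bar>c\<bar> + K * \<bar>t - c\<bar> + 2 * K + 1)"
    obtain x where x: "\<bar>Y - f x\<bar> \<le> K" using K(4) by blast
    have "x \<le> t"
    proof (rule ccontr)
      assume "\<not> x \<le> t"
      then have xt: "x > t" by simp
      show False
      proof (cases "x \<ge> c")
        case True
        then show False using x c[OF True] unfolding Y_def using K(1)
          by (smt (verit, best) abs_ge_zero mult_nonneg_nonneg)
      next
        case False
        have "\<bar>f x - f c\<bar> \<le> K * \<bar>x - c\<bar> + K" using K(2) unfolding coarse_lip_def by blast
        moreover have "K * \<bar>x - c\<bar> \<le> K * \<bar>t - c\<bar>" using False xt K(1)
          by (intro mult_left_mono) auto
        ultimately have "f x \<ge> c - K * \<bar>t - c\<bar> - K" using fc by linarith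
        then show False using x unfolding Y_def by linarith
      qed
    qed
    moreover have "f x < 0" using x unfolding Y_def using K(1)
      by (smt (verit, best) abs_ge_zero mult_nonneg_nonneg)
    ultimately show ?thesis by blast
  qed
  define N0 where "N0 = c - K * (3 * K + \<bar>c\<bar> + 1) - 1"
  have big: "\<bar>f t\<bar> \<ge> 2 * K + 1" if "t \<le> N0 + 1" for t
  proof -
    have "K * (3 * K + \<bar>c\<bar> + 1) \<ge> 0" using K(1) by simp
    then have tc: "t \<le> c" using that unfolding N0_def by linarith
    have "3 * K + \<bar>c\<bar> + 1 \<le> (c - t) / K" using that K(1) unfolding N0_def
      by (simp add: pos_le_divide_eq mult.commute)
    then show ?thesis using prp[OF tc] by linarith
  qed
  have neg: "f t < 0" if "t \<le> N0" for t
  proof (rule ccontr)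
    assume "\<not> f t < 0"
    then have ft: "f t \<ge> 0" by linarith
    obtain x where x: "x \<le> t" "f x < 0" using unb by blast
    obtain z where z: "z \<le> t + 1" "\<bar>f z - 0\<bar> \<le> 2 * K"
      using coarse_ivt[OF K(2) x(1) x(2) ft] by force
    then show False using big[of z] that by simp
  qed
  have bot: "\<exists>N. \<forall>x\<le>N. f x \<le> Z" for Z
  proof (intro exI allI impI)
    fix x assume x: "x \<le> min N0 (c - K * (- Z + K + \<bar>c\<bar>))"
    then have "- Z + K + \<bar>c\<bar> \<le> (c - x) / K" using K(1)
      by (simp add: pos_le_divide_eq mult.commute)
    moreover have "x \<le> c"
    proof -
      have "K * (3 * K + \<bar>c\<bar> + 1) \<ge> 0" using K(1) by simp
      then show ?thesis using x unfolding N0_def by linarith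
    qed
    ultimately show "f x \<le> Z" using prp[of x] neg[of x] x by simp
  qed
  show ?thesis unfolding fixes_ends_def filterlim_at_top filterlim_at_bot
    eventually_at_top_linorder eventually_at_bot_linorder using top bot by blast
qed



lemma qinv:
  assumes qi: "quasi_isometry f"
  shows "\<exists>g. quasi_isometry g \<and> (\<exists>B. \<forall>x. \<bar>g (f x) - x\<bar> \<le> B)
    \<and> (\<forall>c. (\<forall>t\<le>c. f t = t) \<longrightarrow> (\<forall>t\<le>c. g t = t))
    \<and> (\<forall>c. (\<forall>t\<ge>c. f t = t) \<longrightarrow> (\<forall>t\<ge>c. g t = t))
    \<and> (fixes_ends f \<longrightarrow> fixes_ends g)"
proof -
  obtain K where K: "K > 1" "coarse_lip K f" "\<And>a b. \<bar>a - b\<bar> / K - K \<le> \<bar>f a - f b\<bar>"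
    "\<And>y. \<exists>x. \<bar>y - f x\<bar> \<le> K" using qi_elim[OF qi] by metis
  define g where "g y = (if f y = y then y else SOME x. \<bar>y - f x\<bar> \<le> K)" for y
  have gp: "\<bar>y - f (g y)\<bar> \<le> K" for y
  proof (cases "f y = y")
    case True then show ?thesis using K(1) unfolding g_def by simp
  next
    case False then show ?thesis unfolding g_def using someI_ex[OF K(4)[of y]] by simp
  qed
  have gf: "\<bar>g (f x) - x\<bar> \<le> 2 * K * K" for x
  proof -
    have "\<bar>g (f x) - x\<bar> / K - K \<le> \<bar>f (g (f x)) - f x\<bar>" using K(3) .
    also have "\<dots> \<le> K" using gp[of "f x"] by (simp add: abs_minus_commute)
    finally have "\<bar>g (f x) - x\<bar> / K \<le> 2 * K" by simp
    then show ?thesis using K(1) by (simp add: divide_le_eq mult.commute mult.left_commute)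
  qed
  have cl: "coarse_lip (3 * K * K) g" unfolding coarse_lip_def
  proof (intro allI)
    fix a b
    have "\<bar>g a - g b\<bar> / K - K \<le> \<bar>f (g a) - f (g b)\<bar>" using K(3) .
    also have "\<dots> \<le> \<bar>a - b\<bar> + 2 * K" using gp[of a] gp[of b] by linarith
    finally have "\<bar>g a - g b\<bar> / K \<le> \<bar>a - b\<bar> + 3 * K" by simp
    then have gab: "\<bar>g a - g b\<bar> \<le> K * \<bar>a - b\<bar> + 3 * K * K" using K(1)
      by (simp add: divide_le_eq algebra_simps)
    have KK3: "K \<le> 3 * K * K"
    proof -
      have "K * 1 \<le> K * (3 * K)" using K(1) by (intro mult_left_mono) auto
      then show ?thesis by (simp add: algebra_simps)
    qed
    moreover have "K * \<bar>a - b\<bar> \<le> (3 * K * K) * \<bar>a - b\<bar>" using KK3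
      by (intro mult_right_mono) auto
    ultimately show "\<bar>g a - g b\<bar> \<le> 3 * K * K * \<bar>a - b\<bar> + 3 * K * K" using gab by linarith
  qed
  have qg: "quasi_isometry g"
  proof (rule qi_intro[of "3 * K * K" "max K 3" g "2 * K * K"])
    show "0 < 3 * K * K" "0 < max K 3" using K(1) by auto
    show "coarse_lip (3 * K * K) g" by (rule cl)
  next
    fix a b
    have "\<bar>a - b\<bar> \<le> \<bar>f (g a) - f (g b)\<bar> + 2 * K" using gp[of a] gp[of b] by linarith
    also have "\<dots> \<le> K * \<bar>g a - g b\<bar> + 3 * K"
    proof -
      have "\<bar>f (g a) - f (g b)\<bar> \<le> K * \<bar>g a - g b\<bar> + K" using K(2) unfolding coarse_lip_def by blast
      then show ?thesis by linarith
    qed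
    finally have "\<bar>a - b\<bar> / K \<le> \<bar>g a - g b\<bar> + 3" using K(1)
      by (simp add: divide_le_eq algebra_simps)
    moreover have "\<bar>a - b\<bar> / max K 3 \<le> \<bar>a - b\<bar> / K" using K(1) by (intro divide_left_mono) auto
    ultimately show "\<bar>a - b\<bar> / max K 3 - max K 3 \<le> \<bar>g a - g b\<bar>" by linarith
  next
    fix y show "\<exists>x. \<bar>y - g x\<bar> \<le> 2 * K * K"
      using gf[of y] by (intro exI[of _ "f y"]) (simp add: abs_minus_commute)
  qed
  have fe: "fixes_ends g" if fef: "fixes_ends f"
  proof -
    obtain K' C where K': "K' > 0" "coarse_inc K' C f"
      using qi_fixes_nice[OF qi fef] unfolding nice_def by blast
    have top: "\<exists>N. \<forall>y\<ge>N. Z \<le> g y" for Z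
    proof (intro exI allI impI)
      fix y assume y: "f Z + C + K + 1 \<le> y"
      show "Z \<le> g y"
      proof (rule ccontr)
        assume "\<not> Z \<le> g y"
        then have "(Z - g y) / K' - C \<le> f Z - f (g y)" using K'(2) unfolding coarse_inc_def by auto
        moreover have "(Z - g y) / K' \<ge> 0" using K'(1) \<open>\<not> Z \<le> g y\<close> by simp
        ultimately show False using gp[of y] y by linarith
      qed
    qed
    have bot: "\<exists>N. \<forall>y\<le>N. g y \<le> Z" for Z
    proof (intro exI allI impI)
      fix y assume y: "y \<le> f Z - C - K - 1"
      show "g y \<le> Z"
      proof (rule ccontr)
        assume "\<not> g y \<le> Z"
        then have "(g y - Z) / K' - C \<le> f (g y) - f Z" using K'(2) unfolding coarse_inc_def by auto
        moreover have "(g y - Z) / K' \<ge> 0" using K'(1) \<open>\<not> g y \<le> Z\<close> by simp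
        ultimately show False using gp[of y] y by linarith
      qed
    qed
    show ?thesis unfolding fixes_ends_def filterlim_at_top filterlim_at_bot
      eventually_at_top_linorder eventually_at_bot_linorder using top bot by blast
  qed
  show ?thesis
    by (intro exI[of _ g] conjI qg exI[of _ "2 * K * K"] allI gf impI fe) (auto simp: g_def)
qed

lemma coarse_inc_mono:
  assumes "coarse_inc K C f" "0 < K" "K \<le> K'"
  shows "coarse_inc K' C f"
  unfolding coarse_inc_def
proof (intro allI impI)
  fix x y :: real assume xy: "x \<le> y"
  have "(y - x) / K' \<le> (y - x) / K" using assms xy by (intro divide_left_mono) auto
  then show "(y - x) / K' - C \<le> f y - f x" using assms(1) xy unfolding coarse_inc_def by force
qed

lemma glue_nice:
  assumes np: "nice p" and nq: "nice q"
  shows "nice (\<lambda>t. if t \<le> a then p t else q t)"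
proof -
  obtain K1 C1 where K1: "K1 > 0" "coarse_lip K1 p" "coarse_inc K1 C1 p" using np unfolding nice_def by blast
  obtain K2 C2 where K2: "K2 > 0" "coarse_lip K2 q" "coarse_inc K2 C2 q" using nq unfolding nice_def by blast
  define K where "K = max K1 K2"
  define C where "C = max C1 C2"
  have K0: "K > 0" unfolding K_def using K1 by auto
  have "(0 - 0) / K1 - C1 \<le> p 0 - p 0" using K1(3) unfolding coarse_inc_def by blast
  then have C0: "C \<ge> 0" unfolding C_def by simp
  have lp: "coarse_lip K p" "coarse_lip K q" unfolding K_def
    using coarse_lip_mono K1(2) K2(2) by auto
  have ip: "(y - x) / K - C \<le> p y - p x" if "x \<le> y" for x y
  proof -
    have "(y - x) / K \<le> (y - x) / K1" unfolding K_def using that K1(1) by (intro divide_left_mono) auto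
    moreover have "(y - x) / K1 - C1 \<le> p y - p x" using K1(3) that unfolding coarse_inc_def by blast
    ultimately show ?thesis unfolding C_def by linarith
  qed
  have iq: "(y - x) / K - C \<le> q y - q x" if "x \<le> y" for x y
  proof -
    have "(y - x) / K \<le> (y - x) / K2" unfolding K_def using that K2(1) by (intro divide_left_mono) auto
    moreover have "(y - x) / K2 - C2 \<le> q y - q x" using K2(3) that unfolding coarse_inc_def by blast
    ultimately show ?thesis unfolding C_def by linarith
  qed
  define D where "D = \<bar>p a - q a\<bar>"
  have D0: "D \<ge> 0" unfolding D_def by simp
  define g where "g t = (if t \<le> a then p t else q t)" for t
  have mixed: "\<bar>p x1 - q x2\<bar> \<le> K * (x2 - x1) + 2 * K + D" if "x1 \<le> a" "a < x2" for x1 x2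
  proof -
    have "\<bar>p x1 - p a\<bar> \<le> K * \<bar>x1 - a\<bar> + K" using lp(1) unfolding coarse_lip_def by blast
    moreover have "\<bar>q a - q x2\<bar> \<le> K * \<bar>a - x2\<bar> + K" using lp(2) unfolding coarse_lip_def by blast
    moreover have "K * \<bar>x1 - a\<bar> + K * \<bar>a - x2\<bar> = K * (x2 - x1)" using that
      by (simp add: abs_if algebra_simps)
    ultimately show ?thesis unfolding D_def by linarith
  qed
  have "coarse_lip (2 * K + D) g" unfolding coarse_lip_def
  proof (intro allI)
    fix x y
    have KK: "K * \<bar>x - y\<bar> \<le> (2 * K + D) * \<bar>x - y\<bar>" using K0 D0 by (intro mult_right_mono) auto
    have "\<bar>g x - g y\<bar> \<le> K * \<bar>x - y\<bar> + 2 * K + D"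
    proof (cases "x \<le> a"; cases "y \<le> a")
      assume a: "x \<le> a" "y \<le> a"
      have "\<bar>p x - p y\<bar> \<le> K * \<bar>x - y\<bar> + K" using lp(1) unfolding coarse_lip_def by blast
      then show ?thesis using a K0 D0 unfolding g_def by simp
    next
      assume a: "\<not> x \<le> a" "\<not> y \<le> a"
      have "\<bar>q x - q y\<bar> \<le> K * \<bar>x - y\<bar> + K" using lp(2) unfolding coarse_lip_def by blast
      then show ?thesis using a K0 D0 unfolding g_def by simp
    next
      assume a: "x \<le> a" "\<not> y \<le> a" then show ?thesis using mixed[of x y] unfolding g_def by simp
    next
      assume a: "\<not> x \<le> a" "y \<le> a" then show ?thesis using mixed[of y x] unfolding g_def
        by (simp add: abs_minus_commute)
    qed
    then show "\<bar>g x - g y\<bar> \<le> (2 * K + D) * \<bar>x - y\<bar> + (2 * K + D)" using KK K0 by linarith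
  qed
  moreover have "coarse_inc K (2 * C + D) g" unfolding coarse_inc_def
  proof (intro allI impI)
    fix x y :: real assume xy: "x \<le> y"
    show "(y - x) / K - (2 * C + D) \<le> g y - g x"
    proof (cases "y \<le> a")
      case True then show ?thesis using xy ip[OF xy] C0 D0 unfolding g_def by simp
    next
      case ya: False
      show ?thesis
      proof (cases "x \<le> a")
        case False then show ?thesis using xy ya iq[OF xy] C0 D0 unfolding g_def by simp
      next
        case True
        have "(y - a) / K - C \<le> q y - q a" using iq ya by simp
        moreover have "(a - x) / K - C \<le> p a - p x" using ip True by simp
        moreover have "(y - a) / K + (a - x) / K = (y - x) / K" by (simp add: add_divide_distrib[symmetric])
        moreover have "q a - p a \<ge> - D" unfolding D_def by simp
        ultimately show ?thesis using True ya unfolding g_def by simp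
      qed
    qed
  qed
  moreover have "K \<le> 2 * K + D" using K0 D0 by simp
  ultimately show ?thesis unfolding nice_def g_def[abs_def] using K0 D0 coarse_inc_mono
    by (intro exI[of _ "2 * K + D"]) (auto intro!: exI[of _ "2 * C + D"] add_pos_nonneg)
qed



lemma qi_rel_iff: "(f, g) \<in> qi_rel \<longleftrightarrow> quasi_isometry f \<and> quasi_isometry g \<and> (\<exists>B. \<forall>x. \<bar>f x - g x\<bar> \<le> B)"
  by (simp add: qi_rel_def)

lemma equiv_qi: "equiv {f. quasi_isometry f} qi_rel"
proof (rule equivI)
  show "qi_rel \<subseteq> {f. quasi_isometry f} \<times> {f. quasi_isometry f}" by (auto simp: qi_rel_def)
  show "refl_on {f. quasi_isometry f} qi_rel" unfolding refl_on_def
    by (auto simp: qi_rel_iff intro!: exI[of _ 0])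
  show "sym qi_rel" unfolding sym_def
  proof (intro allI impI)
    fix f g assume a: "(f, g) \<in> qi_rel"
    then obtain B where "\<forall>x. \<bar>f x - g x\<bar> \<le> B" by (auto simp: qi_rel_iff)
    then have "\<forall>x. \<bar>g x - f x\<bar> \<le> B" by (simp add: abs_minus_commute)
    then show "(g, f) \<in> qi_rel" using a by (auto simp: qi_rel_iff)
  qed
  show "trans qi_rel" unfolding trans_def
  proof (intro allI impI)
    fix f g h assume a: "(f, g) \<in> qi_rel" "(g, h) \<in> qi_rel"
    then obtain B1 B2 where b: "\<forall>x. \<bar>f x - g x\<bar> \<le> B1" "\<forall>x. \<bar>g x - h x\<bar> \<le> B2" by (auto simp: qi_rel_iff)
    have "\<forall>x. \<bar>f x - h x\<bar> \<le> B1 + B2"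
    proof (intro allI)
      fix x
      have "\<bar>f x - h x\<bar> \<le> \<bar>f x - g x\<bar> + \<bar>g x - h x\<bar>"
        using abs_triangle_ineq[of "f x - g x" "g x - h x"] by simp
      then show "\<bar>f x - h x\<bar> \<le> B1 + B2" using b[rule_format, of x] by linarith
    qed
    then show "(f, h) \<in> qi_rel" using a by (auto simp: qi_rel_iff)
  qed
qed

lemma carrier_QI: "carrier QI = {f. quasi_isometry f} // qi_rel" by (simp add: QI_def)
lemma mult_QI_def: "A \<otimes>\<^bsub>QI\<^esub> B = qi_class ((SOME f. f \<in> A) \<circ> (SOME g. g \<in> B))" by (simp add: QI_def)
lemma one_QI: "\<one>\<^bsub>QI\<^esub> = qi_class id" by (simp add: QI_def)

lemma mem_class: "g \<in> qi_class f \<longleftrightarrow> (f, g) \<in> qi_rel" by (simp add: qi_class_def)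

lemma self_mem: "quasi_isometry f \<Longrightarrow> f \<in> qi_class f"
  using equiv_class_self[OF equiv_qi] by (simp add: qi_class_def)

lemma class_eq: "(f, g) \<in> qi_rel \<Longrightarrow> qi_class f = qi_class g"
  using equiv_class_eq[OF equiv_qi] by (simp add: qi_class_def)

lemma class_eq_iff: "quasi_isometry f \<Longrightarrow> quasi_isometry g \<Longrightarrow> qi_class f = qi_class g \<longleftrightarrow> (f, g) \<in> qi_rel"
  using eq_equiv_class_iff[OF equiv_qi] by (simp add: qi_class_def)

lemma class_carrier: "quasi_isometry f \<Longrightarrow> qi_class f \<in> carrier QI"
  unfolding carrier_QI qi_class_def by (rule quotientI) simp

lemma carrier_ex: "A \<in> carrier QI \<Longrightarrow> \<exists>f. quasi_isometry f \<and> A = qi_class f"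
  unfolding carrier_QI qi_class_def by (erule quotientE) auto

lemma carrier_rep:
  assumes "A \<in> carrier QI" "f \<in> A"
  shows "quasi_isometry f" "A = qi_class f"
proof -
  obtain g where g: "quasi_isometry g" "A = qi_class g" using carrier_ex[OF assms(1)] by blast
  then have r: "(g, f) \<in> qi_rel" using assms(2) mem_class by blast
  then show "quasi_isometry f" by (simp add: qi_rel_iff)
  show "A = qi_class f" using g(2) class_eq[OF r] by simp
qed

lemma rel_comp:
  assumes "(f, f') \<in> qi_rel" "(g, g') \<in> qi_rel"
  shows "(f \<circ> g, f' \<circ> g') \<in> qi_rel"
proof -
  obtain B1 where B1: "\<forall>x. \<bar>f x - f' x\<bar> \<le> B1" and qf: "quasi_isometry f" "quasi_isometry f'"
    using assms(1) by (auto simp: qi_rel_iff)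
  obtain B2 where B2: "\<forall>x. \<bar>g x - g' x\<bar> \<le> B2" and qg: "quasi_isometry g" "quasi_isometry g'"
    using assms(2) by (auto simp: qi_rel_iff)
  obtain K where K: "K > 1" "coarse_lip K f" using qi_elim[OF qf(1)] by metis
  have "\<bar>f (g x) - f' (g' x)\<bar> \<le> K * B2 + K + B1" for x
  proof -
    have "\<bar>f (g x) - f (g' x)\<bar> \<le> K * \<bar>g x - g' x\<bar> + K" using K(2) unfolding coarse_lip_def by blast
    also have "\<dots> \<le> K * B2 + K" using B2 K(1) by (intro add_right_mono mult_left_mono) auto
    finally show ?thesis using B1[rule_format, of "g' x"] by linarith
  qed
  then show ?thesis using qi_comp qf qg by (auto simp: qi_rel_iff)
qed

lemma mult_QI:
  assumes "quasi_isometry f" "quasi_isometry g"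
  shows "qi_class f \<otimes>\<^bsub>QI\<^esub> qi_class g = qi_class (f \<circ> g)"
proof -
  have f': "(SOME f'. f' \<in> qi_class f) \<in> qi_class f" using self_mem[OF assms(1)] by (rule someI[of "\<lambda>f'. f' \<in> qi_class f"])
  have g': "(SOME g'. g' \<in> qi_class g) \<in> qi_class g" using self_mem[OF assms(2)] by (rule someI[of "\<lambda>f'. f' \<in> qi_class g"])
  have "(f \<circ> g, (SOME f'. f' \<in> qi_class f) \<circ> (SOME g'. g' \<in> qi_class g)) \<in> qi_rel"
    using rel_comp f' g' mem_class by blast
  then have "qi_class (f \<circ> g) = qi_class ((SOME f'. f' \<in> qi_class f) \<circ> (SOME g'. g' \<in> qi_class g))"
    by (rule class_eq)
  then show ?thesis unfolding mult_QI_def by simp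
qed

lemma group_QI: "group QI"
proof (rule groupI)
  fix x y assume xy: "x \<in> carrier QI" "y \<in> carrier QI"
  obtain f where f: "quasi_isometry f" "x = qi_class f" using carrier_ex[OF xy(1)] by blast
  obtain g where g: "quasi_isometry g" "y = qi_class g" using carrier_ex[OF xy(2)] by blast
  have "x \<otimes>\<^bsub>QI\<^esub> y = qi_class (f \<circ> g)" unfolding f(2) g(2) by (rule mult_QI[OF f(1) g(1)])
  then show "x \<otimes>\<^bsub>QI\<^esub> y \<in> carrier QI" using class_carrier[OF qi_comp[OF f(1) g(1)]] by simp
next
  show "\<one>\<^bsub>QI\<^esub> \<in> carrier QI" unfolding one_QI by (rule class_carrier[OF qi_id])
next
  fix x y z assume xyz: "x \<in> carrier QI" "y \<in> carrier QI" "z \<in> carrier QI"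
  obtain f where f: "quasi_isometry f" "x = qi_class f" using carrier_ex[OF xyz(1)] by blast
  obtain g where g: "quasi_isometry g" "y = qi_class g" using carrier_ex[OF xyz(2)] by blast
  obtain h where h: "quasi_isometry h" "z = qi_class h" using carrier_ex[OF xyz(3)] by blast
  have "x \<otimes>\<^bsub>QI\<^esub> y \<otimes>\<^bsub>QI\<^esub> z = qi_class (f \<circ> g \<circ> h)"
    unfolding f(2) g(2) h(2) mult_QI[OF f(1) g(1)] mult_QI[OF qi_comp[OF f(1) g(1)] h(1)] ..
  moreover have "x \<otimes>\<^bsub>QI\<^esub> (y \<otimes>\<^bsub>QI\<^esub> z) = qi_class (f \<circ> (g \<circ> h))"
    unfolding f(2) g(2) h(2) mult_QI[OF g(1) h(1)] mult_QI[OF f(1) qi_comp[OF g(1) h(1)]] ..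
  ultimately show "x \<otimes>\<^bsub>QI\<^esub> y \<otimes>\<^bsub>QI\<^esub> z = x \<otimes>\<^bsub>QI\<^esub> (y \<otimes>\<^bsub>QI\<^esub> z)"
    by (simp only: comp_assoc)
next
  fix x assume x: "x \<in> carrier QI"
  obtain f where f: "quasi_isometry f" "x = qi_class f" using carrier_ex[OF x] by blast
  show "\<one>\<^bsub>QI\<^esub> \<otimes>\<^bsub>QI\<^esub> x = x" unfolding f(2) one_QI mult_QI[OF qi_id f(1)] by simp
next
  fix x assume x: "x \<in> carrier QI"
  obtain f where f: "quasi_isometry f" "x = qi_class f" using carrier_ex[OF x] by blast
  obtain g where gg: "quasi_isometry g" "\<exists>B. \<forall>x. \<bar>g (f x) - x\<bar> \<le> B"
    using qinv[OF f(1)] by blast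
  obtain B where gB: "\<forall>x. \<bar>g (f x) - x\<bar> \<le> B" using gg(2) by blast
  have "\<forall>x. \<bar>(g \<circ> f) x - id x\<bar> \<le> B" using gB by simp
  then have "(g \<circ> f, id) \<in> qi_rel" unfolding qi_rel_iff using qi_comp[OF gg(1) f(1)] qi_id by blast
  then have e: "qi_class (g \<circ> f) = qi_class id" by (rule class_eq)
  have "qi_class g \<otimes>\<^bsub>QI\<^esub> x = \<one>\<^bsub>QI\<^esub>" unfolding f(2) one_QI mult_QI[OF gg(1) f(1)] e ..
  then show "\<exists>y\<in>carrier QI. y \<otimes>\<^bsub>QI\<^esub> x = \<one>\<^bsub>QI\<^esub>" using class_carrier[OF gg(1)] by blast
qed

lemma inv_QI:
  assumes "quasi_isometry f" "quasi_isometry g" "\<forall>x. \<bar>g (f x) - x\<bar> \<le> B"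
  shows "inv\<^bsub>QI\<^esub> (qi_class f) = qi_class g"
proof -
  have "\<forall>x. \<bar>(g \<circ> f) x - id x\<bar> \<le> B" using assms(3) by simp
  then have "(g \<circ> f, id) \<in> qi_rel" unfolding qi_rel_iff using qi_comp[OF assms(2,1)] qi_id by blast
  then have e: "qi_class (g \<circ> f) = qi_class id" by (rule class_eq)
  have "qi_class g \<otimes>\<^bsub>QI\<^esub> qi_class f = \<one>\<^bsub>QI\<^esub>" unfolding one_QI mult_QI[OF assms(2,1)] e ..
  then show ?thesis
    by (rule group.inv_equality[OF group_QI _ class_carrier[OF assms(1)] class_carrier[OF assms(2)]])
qed



lemma subgroup_prop:
  assumes S: "S = {C \<in> carrier QI. \<exists>f\<in>C. P f}" and Pid: "P id"
    and Pc: "\<And>f g. quasi_isometry f \<Longrightarrow> quasi_isometry g \<Longrightarrow> P f \<Longrightarrow> P g \<Longrightarrow> P (f \<circ> g)"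
    and Pi: "\<And>f. quasi_isometry f \<Longrightarrow> P f \<Longrightarrow> \<exists>g B. quasi_isometry g \<and> (\<forall>x. \<bar>g (f x) - x\<bar> \<le> B) \<and> P g"
  shows "subgroup S QI"
proof -
  have mem: "qi_class f \<in> S" if "quasi_isometry f" "P f" for f
    unfolding S using class_carrier[OF that(1)] self_mem[OF that(1)] that(2) by blast
  have rep: "\<exists>f. quasi_isometry f \<and> a = qi_class f \<and> P f" if ha: "a \<in> S" for a
  proof -
    obtain f where f: "f \<in> a" "P f" "a \<in> carrier QI" using ha unfolding S by blast
    show ?thesis using carrier_rep[OF f(3,1)] f(2) by blast
  qed
  show ?thesis
  proof (rule group.subgroupI[OF group_QI])
  show "S \<subseteq> carrier QI" unfolding S by blast
  show "S \<noteq> {}" using mem[OF qi_id Pid] by blast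
  fix a assume a: "a \<in> S"
  obtain f where f: "quasi_isometry f" "a = qi_class f" "P f" using rep[OF a] by blast
  obtain g B where g: "quasi_isometry g" "\<forall>x. \<bar>g (f x) - x\<bar> \<le> B" "P g" using Pi[OF f(1) f(3)] by blast
  show "inv\<^bsub>QI\<^esub> a \<in> S" unfolding f(2) inv_QI[OF f(1) g(1,2)] using mem[OF g(1,3)] .
next
  fix a b assume ab: "a \<in> S" "b \<in> S"
  obtain f where f: "quasi_isometry f" "a = qi_class f" "P f" using rep[OF ab(1)] by blast
  obtain g where g: "quasi_isometry g" "b = qi_class g" "P g" using rep[OF ab(2)] by blast
  show "a \<otimes>\<^bsub>QI\<^esub> b \<in> S" unfolding f(2) g(2) mult_QI[OF f(1) g(1)]
    using mem[OF qi_comp[OF f(1) g(1)] Pc[OF f(1) g(1) f(3) g(3)]] .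
  qed
qed

lemma sub_QIp: "subgroup QI_plus QI"
proof (rule subgroup_prop[OF QI_plus_def fe_id])
  show "fixes_ends (f \<circ> g)" if "fixes_ends f" "fixes_ends g" for f g using fe_comp that .
  fix f assume f: "quasi_isometry f" "fixes_ends f"
  obtain g where g: "quasi_isometry g" "\<exists>B. \<forall>x. \<bar>g (f x) - x\<bar> \<le> B" "fixes_ends f \<longrightarrow> fixes_ends g"
    using qinv[OF f(1)] by blast
  then show "\<exists>g B. quasi_isometry g \<and> (\<forall>x. \<bar>g (f x) - x\<bar> \<le> B) \<and> fixes_ends g" using f(2) by blast
qed

lemma sub_Qp: "subgroup Q_plus QI"
proof (rule subgroup_prop[OF Q_plus_def])
  show "id_near_minus_inf id" unfolding id_near_minus_inf_def by simp
  show "id_near_minus_inf (f \<circ> g)" if hh: "id_near_minus_inf f" "id_near_minus_inf g" for f g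
  proof -
    obtain c d where "\<forall>t\<le>c. f t = t" "\<forall>t\<le>d. g t = t" using hh unfolding id_near_minus_inf_def by blast
    then show ?thesis unfolding id_near_minus_inf_def by (intro exI[of _ "min c d"]) auto
  qed
  fix f assume f: "quasi_isometry f" "id_near_minus_inf f"
  obtain g where g: "quasi_isometry g" "\<exists>B. \<forall>x. \<bar>g (f x) - x\<bar> \<le> B"
     "\<forall>c. (\<forall>t\<le>c. f t = t) \<longrightarrow> (\<forall>t\<le>c. g t = t)"
    using qinv[OF f(1)] by blast
  then show "\<exists>g B. quasi_isometry g \<and> (\<forall>x. \<bar>g (f x) - x\<bar> \<le> B) \<and> id_near_minus_inf g"
    using f(2) unfolding id_near_minus_inf_def by blast
qed

lemma sub_Qm: "subgroup Q_minus QI"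
proof (rule subgroup_prop[OF Q_minus_def])
  show "id_near_plus_inf id" unfolding id_near_plus_inf_def by simp
  show "id_near_plus_inf (f \<circ> g)" if hh: "id_near_plus_inf f" "id_near_plus_inf g" for f g
  proof -
    obtain c d where "\<forall>t\<ge>c. f t = t" "\<forall>t\<ge>d. g t = t" using hh unfolding id_near_plus_inf_def by blast
    then show ?thesis unfolding id_near_plus_inf_def by (intro exI[of _ "max c d"]) auto
  qed
  fix f assume f: "quasi_isometry f" "id_near_plus_inf f"
  obtain g where g: "quasi_isometry g" "\<exists>B. \<forall>x. \<bar>g (f x) - x\<bar> \<le> B"
     "\<forall>c. (\<forall>t\<ge>c. f t = t) \<longrightarrow> (\<forall>t\<ge>c. g t = t)"
    using qinv[OF f(1)] by blast
  then show "\<exists>g B. quasi_isometry g \<and> (\<forall>x. \<bar>g (f x) - x\<bar> \<le> B) \<and> id_near_plus_inf g"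
    using f(2) unfolding id_near_plus_inf_def by blast
qed

lemma Qp_sub: "Q_plus \<subseteq> QI_plus"
proof
  fix C assume "C \<in> Q_plus"
  then obtain f c where f: "C \<in> carrier QI" "f \<in> C" "\<forall>t\<le>c. f t = t"
    unfolding Q_plus_def id_near_minus_inf_def by blast
  have "fixes_ends f" using idminus_fe[OF carrier_rep(1)[OF f(1,2)]] f(3) by blast
  then show "C \<in> QI_plus" unfolding QI_plus_def using f by blast
qed

lemma Qm_sub: "Q_minus \<subseteq> QI_plus"
proof
  fix C assume "C \<in> Q_minus"
  then obtain f c where f: "C \<in> carrier QI" "f \<in> C" "\<forall>t\<ge>c. f t = t"
    unfolding Q_minus_def id_near_plus_inf_def by blast
  have "fixes_ends f" using idplus_fe[OF carrier_rep(1)[OF f(1,2)]] f(3) by blast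
  then show "C \<in> QI_plus" unfolding QI_plus_def using f by blast
qed



lemma inter_one: "Q_plus \<inter> Q_minus = {\<one>\<^bsub>QI\<^esub>}"
proof
  show "{\<one>\<^bsub>QI\<^esub>} \<subseteq> Q_plus \<inter> Q_minus"
    using class_carrier[OF qi_id] self_mem[OF qi_id]
    unfolding one_QI Q_plus_def Q_minus_def id_near_minus_inf_def id_near_plus_inf_def
    by (auto intro!: bexI[of _ id])
  show "Q_plus \<inter> Q_minus \<subseteq> {\<one>\<^bsub>QI\<^esub>}"
  proof
    fix C assume "C \<in> Q_plus \<inter> Q_minus"
    then obtain f g c d where fg: "C \<in> carrier QI" "f \<in> C" "\<forall>t\<le>c. f t = t" "g \<in> C" "\<forall>t\<ge>d. g t = t"
      unfolding Q_plus_def Q_minus_def id_near_minus_inf_def id_near_plus_inf_def by blast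
    have qf: "quasi_isometry f" and Cf: "C = qi_class f" using carrier_rep[OF fg(1,2)] by auto
    have "(f, g) \<in> qi_rel" using fg(4) Cf mem_class by blast
    then obtain B where B: "\<forall>x. \<bar>f x - g x\<bar> \<le> B" by (auto simp: qi_rel_iff)
    obtain K where K: "K > 1" "coarse_lip K f" using qi_elim[OF qf] by metis
    define U where "U = max c d"
    define B' where "B' = max B (\<bar>f c\<bar> + K * (U - c) + K + \<bar>c\<bar> + \<bar>U\<bar>)"
    have "\<bar>f x - id x\<bar> \<le> B'" for x
    proof (cases "x \<le> c")
      case True
      have "K * (U - c) \<ge> 0" using K(1) unfolding U_def by simp
      then have "0 \<le> \<bar>f c\<bar> + K * (U - c) + K + \<bar>c\<bar> + \<bar>U\<bar>" using K(1) by simp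
      then have "0 \<le> B'" unfolding B'_def by (simp add: le_max_iff_disj)
      then show ?thesis using True fg(3) by auto
    next
      case False
      show ?thesis
      proof (cases "x \<ge> U")
        case True
        then have "g x = x" using fg(5) unfolding U_def by auto
        then show ?thesis using B[rule_format, of x] unfolding B'_def by auto
      next
        case xU: False
        have "\<bar>f x\<bar> \<le> \<bar>f c\<bar> + K * (U - c) + K" using coarse_lip_bound[OF K(2), of c x U] False xU by simp
        moreover have "\<bar>x\<bar> \<le> \<bar>c\<bar> + \<bar>U\<bar>" using False xU by linarith
        ultimately have "\<bar>f x - x\<bar> \<le> \<bar>f c\<bar> + K * (U - c) + K + \<bar>c\<bar> + \<bar>U\<bar>"
          using abs_triangle_ineq4[of "f x" x] by linarith
        then show ?thesis unfolding B'_def by (simp add: le_max_iff_disj)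
      qed
    qed
    then have "(f, id) \<in> qi_rel" unfolding qi_rel_iff using qf qi_id by blast
    then have "C = \<one>\<^bsub>QI\<^esub>" unfolding Cf one_QI by (rule class_eq)
    then show "C \<in> {\<one>\<^bsub>QI\<^esub>}" by simp
  qed
qed

lemma commute:
  assumes "a \<in> Q_plus" "b \<in> Q_minus"
  shows "a \<otimes>\<^bsub>QI\<^esub> b = b \<otimes>\<^bsub>QI\<^esub> a"
proof -
  obtain f c where f: "a \<in> carrier QI" "f \<in> a" "\<forall>t\<le>c. f t = t"
    using assms(1) unfolding Q_plus_def id_near_minus_inf_def by blast
  obtain g d where g: "b \<in> carrier QI" "g \<in> b" "\<forall>t\<ge>d. g t = t"
    using assms(2) unfolding Q_minus_def id_near_plus_inf_def by blast
  have qf: "quasi_isometry f" "a = qi_class f" using carrier_rep[OF f(1,2)] by auto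
  have qg: "quasi_isometry g" "b = qi_class g" using carrier_rep[OF g(1,2)] by auto
  have fef: "fixes_ends f" using idminus_fe[OF qf(1)] f(3) by blast
  have feg: "fixes_ends g" using idplus_fe[OF qg(1)] g(3) by blast
  obtain T1 where T1: "\<forall>t\<le>T1. g t \<le> c"
    using feg unfolding fixes_ends_def filterlim_at_bot eventually_at_bot_linorder by blast
  obtain T2 where T2: "\<forall>t\<ge>T2. d \<le> f t"
    using fef unfolding fixes_ends_def filterlim_at_top eventually_at_top_linorder by blast
  obtain K1 where K1: "K1 > 1" "coarse_lip K1 (f \<circ> g)" using qi_elim[OF qi_comp[OF qf(1) qg(1)]] by metis
  obtain K2 where K2: "K2 > 1" "coarse_lip K2 (g \<circ> f)" using qi_elim[OF qi_comp[OF qg(1) qf(1)]] by metis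
  define L where "L = min T1 c"
  define U where "U = max (max T2 d) L"
  define B where "B = \<bar>(f \<circ> g) L\<bar> + K1 * (U - L) + K1 + \<bar>(g \<circ> f) L\<bar> + K2 * (U - L) + K2"
  have "\<bar>(f \<circ> g) x - (g \<circ> f) x\<bar> \<le> B" for x
  proof (cases "x \<le> L")
    case True
    have "g x \<le> c" using T1 True unfolding L_def by auto
    then have "f (g x) = g x" using f(3) by auto
    moreover have "f x = x" using f(3) True unfolding L_def by auto
    moreover have "B \<ge> 0" unfolding B_def U_def using K1(1) K2(1) by simp
    ultimately show ?thesis by simp
  next
    case False
    show ?thesis
    proof (cases "x \<ge> U")
      case True
      have "g x = x" using g(3) True unfolding U_def by auto
      moreover have "d \<le> f x" using T2 True unfolding U_def by auto
      then have "g (f x) = f x" using g(3) by auto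
      moreover have "B \<ge> 0" unfolding B_def U_def using K1(1) K2(1) by simp
      ultimately show ?thesis by simp
    next
      case xU: False
      have "\<bar>(f \<circ> g) x\<bar> \<le> \<bar>(f \<circ> g) L\<bar> + K1 * (U - L) + K1"
        using coarse_lip_bound[OF K1(2), of L x U] False xU by simp
      moreover have "\<bar>(g \<circ> f) x\<bar> \<le> \<bar>(g \<circ> f) L\<bar> + K2 * (U - L) + K2"
        using coarse_lip_bound[OF K2(2), of L x U] False xU by simp
      ultimately show ?thesis unfolding B_def by linarith
    qed
  qed
  then have "(f \<circ> g, g \<circ> f) \<in> qi_rel" unfolding qi_rel_iff
    using qi_comp[OF qf(1) qg(1)] qi_comp[OF qg(1) qf(1)] by blast
  then have "qi_class (f \<circ> g) = qi_class (g \<circ> f)" by (rule class_eq)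
  then show ?thesis unfolding qf(2) qg(2) mult_QI[OF qf(1) qg(1)] mult_QI[OF qg(1) qf(1)] .
qed

lemma nice_id: "nice id"
  unfolding nice_def coarse_lip_def coarse_inc_def
  by (intro exI[of _ 1] conjI exI[of _ 0]) auto

lemma product: "QI_plus = Q_plus <#>\<^bsub>QI\<^esub> Q_minus"
proof
  show "Q_plus <#>\<^bsub>QI\<^esub> Q_minus \<subseteq> QI_plus"
  proof
    fix x assume "x \<in> Q_plus <#>\<^bsub>QI\<^esub> Q_minus"
    then obtain a b where ab: "a \<in> Q_plus" "b \<in> Q_minus" "x = a \<otimes>\<^bsub>QI\<^esub> b" unfolding set_mult_def by blast
    then show "x \<in> QI_plus" using subgroup.m_closed[OF sub_QIp] Qp_sub Qm_sub by blast
  qed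
  show "QI_plus \<subseteq> Q_plus <#>\<^bsub>QI\<^esub> Q_minus"
  proof
    fix C assume "C \<in> QI_plus"
    then obtain h where h: "C \<in> carrier QI" "h \<in> C" "fixes_ends h" unfolding QI_plus_def by blast
    have qh: "quasi_isometry h" "C = qi_class h" using carrier_rep[OF h(1,2)] by auto
    have nh: "nice h" using qi_fixes_nice[OF qh(1) h(3)] .
    define p where "p = (\<lambda>t::real. if t \<le> 0 then h t else t)"
    define f where "f = (\<lambda>t::real. if t \<le> 0 then t else h t)"
    have np: "nice p" using glue_nice[OF nh nice_id, of 0] unfolding p_def id_apply .
    have nf: "nice f" using glue_nice[OF nice_id nh, of 0] unfolding f_def id_apply .
    have qp: "quasi_isometry p" and qf: "quasi_isometry f" using nice_qi_fixes np nf by auto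
    have "\<forall>t\<le>0. f t = t" unfolding f_def by simp
    then have Af: "qi_class f \<in> Q_plus" unfolding Q_plus_def id_near_minus_inf_def
      using class_carrier[OF qf] self_mem[OF qf] by blast
    have "\<forall>t\<ge>1. p t = t" unfolding p_def by simp
    then have Bp: "qi_class p \<in> Q_minus" unfolding Q_minus_def id_near_plus_inf_def
      using class_carrier[OF qp] self_mem[OF qp] by blast
    obtain T0 where T0: "\<forall>t\<le>T0. h t \<le> 0"
      using h(3) unfolding fixes_ends_def filterlim_at_bot eventually_at_bot_linorder by blast
    define T where "T = min T0 0"
    obtain K1 where K1: "K1 > 1" "coarse_lip K1 (f \<circ> p)" using qi_elim[OF qi_comp[OF qf qp]] by metis
    obtain K2 where K2: "K2 > 1" "coarse_lip K2 h" using qi_elim[OF qh(1)] by metis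
    define B where "B = \<bar>(f \<circ> p) T\<bar> + K1 * (0 - T) + K1 + \<bar>h T\<bar> + K2 * (0 - T) + K2"
    have T0le: "0 - T \<ge> 0" unfolding T_def by simp
    have "K1 * (0 - T) \<ge> 0" using K1(1) T0le by (intro mult_nonneg_nonneg) auto
    moreover have "K2 * (0 - T) \<ge> 0" using K2(1) T0le by (intro mult_nonneg_nonneg) auto
    ultimately have B0: "B \<ge> 0" unfolding B_def using K1(1) K2(1) by simp
    have "\<bar>h x - (f \<circ> p) x\<bar> \<le> B" for x
    proof (cases "x \<le> T")
      case True
      then have "h x \<le> 0" "x \<le> 0" using T0 unfolding T_def by auto
      then have "(f \<circ> p) x = h x" unfolding f_def p_def by simp
      moreover note B0
      ultimately show ?thesis by simp
    next
      case False
      show ?thesis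
      proof (cases "x > 0")
        case True
        then have "(f \<circ> p) x = h x" unfolding f_def p_def by simp
        moreover note B0
        ultimately show ?thesis by simp
      next
        case x0: False
        have "\<bar>(f \<circ> p) x\<bar> \<le> \<bar>(f \<circ> p) T\<bar> + K1 * (0 - T) + K1"
          using coarse_lip_bound[OF K1(2), of T x 0] False x0 by simp
        moreover have "\<bar>h x\<bar> \<le> \<bar>h T\<bar> + K2 * (0 - T) + K2"
          using coarse_lip_bound[OF K2(2), of T x 0] False x0 by simp
        ultimately show ?thesis unfolding B_def by linarith
      qed
    qed
    then have "(h, f \<circ> p) \<in> qi_rel" unfolding qi_rel_iff using qh(1) qi_comp[OF qf qp] by blast
    then have "C = qi_class f \<otimes>\<^bsub>QI\<^esub> qi_class p" unfolding qh(2) mult_QI[OF qf qp] by (rule class_eq)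
    then show "C \<in> Q_plus <#>\<^bsub>QI\<^esub> Q_minus" unfolding set_mult_def using Af Bp by blast
  qed
qed



lemma sg_eq:
  assumes "subgroup H G"
  shows "subgroup_generated G H = G\<lparr>carrier := H\<rparr>"
proof -
  have "carrier (subgroup_generated G H) = H"
    by (rule subgroup.carrier_subgroup_generated_subgroup[OF assms])
  then show ?thesis unfolding subgroup_generated_def by simp
qed

theorem mainTheorem2:
  shows "group QI
    \<and> subgroup QI_plus QI
    \<and> subgroup Q_plus QI \<and> subgroup Q_minus QI
    \<and> Q_plus \<subseteq> QI_plus \<and> Q_minus \<subseteq> QI_plus
    \<and> Q_plus \<inter> Q_minus = {\<one>\<^bsub>QI\<^esub>}
    \<and> (\<forall>a\<in>Q_plus. \<forall>b\<in>Q_minus. a \<otimes>\<^bsub>QI\<^esub> b = b \<otimes>\<^bsub>QI\<^esub> a)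
    \<and> QI_plus = Q_plus <#>\<^bsub>QI\<^esub> Q_minus
    \<and> QI\<lparr>carrier := QI_plus\<rparr> \<cong> QI\<lparr>carrier := Q_plus\<rparr> \<times>\<times> QI\<lparr>carrier := Q_minus\<rparr>"
proof -
  define G' where "G' = QI\<lparr>carrier := QI_plus\<rparr>"
  have gG': "group G'" unfolding G'_def by (rule group.subgroup_imp_group[OF group_QI sub_QIp])
  have sA: "subgroup Q_plus G'" unfolding G'_def by (rule group.subgroup_incl[OF group_QI sub_Qp sub_QIp Qp_sub])
  have sB: "subgroup Q_minus G'" unfolding G'_def by (rule group.subgroup_incl[OF group_QI sub_Qm sub_QIp Qm_sub])
  have D: "group_disjoint_sum G' Q_plus Q_minus"
    unfolding group_disjoint_sum_def using gG' sA sB by (intro conjI)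
  have one': "\<one>\<^bsub>G'\<^esub> = \<one>\<^bsub>QI\<^esub>" unfolding G'_def by simp
  have mult': "x \<otimes>\<^bsub>G'\<^esub> y = x \<otimes>\<^bsub>QI\<^esub> y" for x y unfolding G'_def by simp
  have setm': "Q_plus <#>\<^bsub>G'\<^esub> Q_minus = Q_plus <#>\<^bsub>QI\<^esub> Q_minus" unfolding set_mult_def mult' ..
  have car': "carrier G' = QI_plus" unfolding G'_def by simp
  have "(\<lambda>(x,y). x \<otimes>\<^bsub>G'\<^esub> y) \<in> iso (subgroup_generated G' Q_plus \<times>\<times> subgroup_generated G' Q_minus) G'"
    unfolding group_disjoint_sum.iso_group_mul_alt[OF D] unfolding one' setm' car' mult'
  proof (intro conjI ballI)
    show "Q_plus \<inter> Q_minus = {\<one>\<^bsub>QI\<^esub>}" by (rule inter_one)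
    show "Q_plus <#>\<^bsub>QI\<^esub> Q_minus = QI_plus" by (rule product[symmetric])
    fix x y assume "x \<in> Q_plus" "y \<in> Q_minus"
    then show "x \<otimes>\<^bsub>QI\<^esub> y = y \<otimes>\<^bsub>QI\<^esub> x" by (rule commute)
  qed
  moreover have "subgroup_generated G' Q_plus = QI\<lparr>carrier := Q_plus\<rparr>"
    using sg_eq[OF sA] unfolding G'_def by simp
  moreover have "subgroup_generated G' Q_minus = QI\<lparr>carrier := Q_minus\<rparr>"
    using sg_eq[OF sB] unfolding G'_def by simp
  ultimately have "QI\<lparr>carrier := Q_plus\<rparr> \<times>\<times> QI\<lparr>carrier := Q_minus\<rparr> \<cong> G'" unfolding is_iso_def by auto
  moreover have "group (QI\<lparr>carrier := Q_plus\<rparr> \<times>\<times> QI\<lparr>carrier := Q_minus\<rparr>)"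
    by (rule DirProd_group[OF group.subgroup_imp_group[OF group_QI sub_Qp] group.subgroup_imp_group[OF group_QI sub_Qm]])
  ultimately have iso: "G' \<cong> QI\<lparr>carrier := Q_plus\<rparr> \<times>\<times> QI\<lparr>carrier := Q_minus\<rparr>" using group.iso_sym by blast
  have c: "\<forall>a\<in>Q_plus. \<forall>b\<in>Q_minus. a \<otimes>\<^bsub>QI\<^esub> b = b \<otimes>\<^bsub>QI\<^esub> a" using commute by blast
  have iso': "QI\<lparr>carrier := QI_plus\<rparr> \<cong> QI\<lparr>carrier := Q_plus\<rparr> \<times>\<times> QI\<lparr>carrier := Q_minus\<rparr>"
    using iso unfolding G'_def .
  show ?thesis
    by (intro conjI) (fact group_QI sub_QIp sub_Qp sub_Qm Qp_sub Qm_sub inter_one c product iso')+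
qed

end
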